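(* In the setting below, assume $Z$ is monotone on $[0,x_+]$, the initial data is the step $p_0(\xi)=1$ for $\xi\le0$ and $p_0(\xi)=0$ for $\xi>0$, and $e^{-\pi}<Z_+/Z_-<e^{\pi}$. Then $$\sum_{m=0}^\infty T_{2m}^\infty=\frac{2Z_+}{Z_-+Z_+}=C_G\,\operatorname{sech}(\log C_G),\qquad \sum_{m=0}^\infty R_{2m+1}^\infty=\frac{Z_+-Z_-}{Z_-+Z_+}=\tanh(\log C_G),$$ where $T_{2m}^\infty=\lim_{t\to\infty}T_{2m}(t)$ and $R_{2m+1}^\infty=\lim_{t\to\infty}R_{2m+1}(t)$. Both series converge.
   Context: Setting. Fix $x_+>0$. Let $K,\rho:\mathbb R\to(0,\infty)$ be continuous. On $(-\infty,0)$ they are constant, $(K,\rho)=(K_-,\rho_-)$; on $(x_+,\infty)$ they are constant, $(K,\rho)=(K_+,\rho_+)$; and on $[0,x_+]$ they are continuously differentiable. Define $Z=\sqrt{K\rho}$ and $c=\sqrt{K/\rho}$, with constant values $Z_\pm$, $c_\pm$ outside $[0,x_+]$. Let $r(x)=Z'(x)/(2Z(x))$ on $[0,x_+]$, $\tau(x)=\int_0^x ds/c(s)$, $t_+=\tau(x_+)$, and $C_G=\sqrt{Z_+/Z_-}$. A sequence $\mathbf x=(x_1,\dots,x_n)$ is alternating if $x_1\ge x_2\le x_3\ge\cdots$, that is, $x_j\le x_{j-1}$ for even $j\ge2$ and $x_j\ge x_{j-1}$ for odd $j\ge3$. Let $\mathcal P_n^{[0,x_+]}$ be the set of alternating $\mathbf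 x\in[0,x_+]^n$, and put $\hat t(\mathbf x)=2\sum_{j=1}^n(-1)^{j+1}\tau(x_j)$. Define $$\xi_R(\mathbf x,x,t)=-c_-(t-\hat t(\mathbf x)+\tau(x)),\qquad \xi_T(\mathbf x,x,t)=-c_-(t-\hat t(\mathbf x)-\tau(x)).$$ For $m\ge0$ define $$R_{2m+1}(t)=(-1)^m\int_{\mathcal P_{2m+1}^{[0,x_+]}}p_0(\xi_R(\mathbf x,0,t))\prod_{j=1}^{2m+1}r(x_j)\,d\mathbf x,$$ $$T_{2m}(t)=(-1)^mC_G\int_{\mathcal P_{2m}^{[0,x_+]}}p_0(\xi_T(\mathbf x,x_+,t))\prod_{j=1}^{2m}r(x_j)\,d\mathbf x,$$ with $T_0(t)=C_G\,p_0(-c_-(t-t_+))$. *)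

theory Defs
  imports "HOL-Analysis.Analysis"
begin

text \<open>Sequences (x_1,...,x_n) are represented as extensional functions nat => real
  on the index set {1..n}; the measure on R^n is the product of Lebesgue-Borel measures.\<close>

definition alternating :: "nat \<Rightarrow> (nat \<Rightarrow> real) \<Rightarrow> bool" where
  "alternating n x \<longleftrightarrow>
     (\<forall>j\<in>{2..n}. (even j \<longrightarrow> x j \<le> x (j - 1)) \<and> (odd j \<longrightarrow> x (j - 1) \<le> x j))"

definition altset :: "nat \<Rightarrow> real \<Rightarrow> (nat \<Rightarrow> real) set" where
  "altset n a = {x \<in> PiE {1..n} (\<lambda>_. {0..a}). alternating n x}"

definition tau :: "(real \<Rightarrow> real) \<Rightarrow> real \<Rightarrow> real" where
  "tau c x = integral {0..x} (\<lambda>s. 1 / c s)"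

definition that :: "(real \<Rightarrow> real) \<Rightarrow> nat \<Rightarrow> (nat \<Rightarrow> real) \<Rightarrow> real" where
  "that \<tau> n x = 2 * (\<Sum>j=1..n. (-1) ^ (j + 1) * \<tau> (x j))"

definition xiR :: "real \<Rightarrow> (real \<Rightarrow> real) \<Rightarrow> nat \<Rightarrow> (nat \<Rightarrow> real) \<Rightarrow> real \<Rightarrow> real \<Rightarrow> real" where
  "xiR cm \<tau> n x y t = - cm * (t - that \<tau> n x + \<tau> y)"

definition xiT :: "real \<Rightarrow> (real \<Rightarrow> real) \<Rightarrow> nat \<Rightarrow> (nat \<Rightarrow> real) \<Rightarrow> real \<Rightarrow> real \<Rightarrow> real" where
  "xiT cm \<tau> n x y t = - cm * (t - that \<tau> n x - \<tau> y)"

definition Rcoef :: "(real \<Rightarrow> real) \<Rightarrow> real \<Rightarrow> (real \<Rightarrow> real) \<Rightarrow> (real \<Rightarrow> real)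
    \<Rightarrow> real \<Rightarrow> nat \<Rightarrow> real \<Rightarrow> real" where
  "Rcoef p0 cm \<tau> r xp m t =
     (-1) ^ m * (LINT x : altset (2 * m + 1) xp | PiM {1..2 * m + 1} (\<lambda>_. lborel).
        p0 (xiR cm \<tau> (2 * m + 1) x 0 t) * (\<Prod>j=1..2 * m + 1. r (x j)))"

definition Tcoef :: "(real \<Rightarrow> real) \<Rightarrow> real \<Rightarrow> real \<Rightarrow> (real \<Rightarrow> real) \<Rightarrow> (real \<Rightarrow> real)
    \<Rightarrow> real \<Rightarrow> nat \<Rightarrow> real \<Rightarrow> real" where
  "Tcoef p0 cm CG \<tau> r xp m t =
     (if m = 0 then CG * p0 (- cm * (t - \<tau> xp))
      else (-1) ^ m * CG * (LINT x : altset (2 * m) xp | PiM {1..2 * m} (\<lambda>_. lborel).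
        p0 (xiT cm \<tau> (2 * m) x xp t) * (\<Prod>j=1..2 * m. r (x j))))"

end

theory Submission
  imports Defs
begin


definition Sset :: "nat \<Rightarrow> real \<Rightarrow> real \<Rightarrow> (nat \<Rightarrow> real) set" where
  "Sset n a y = {x \<in> PiE {1..n} (\<lambda>_. {0..a}). alternating (Suc n) (x(Suc n := y))}"

definition cu :: "nat set \<Rightarrow> real \<Rightarrow> nat \<Rightarrow> (nat \<Rightarrow> real) \<Rightarrow> real" where
  "cu I c j x = (if j \<in> I then x j else c)"

lemma meas_cu1[measurable]:
  "cu I c j \<in> borel_measurable (PiM I (\<lambda>_. lborel::real measure))"
  unfolding cu_def by (cases "j \<in> I") auto
lemma meas_cu2[measurable]:
  "cu I c j \<in> borel_measurable (PiM I (\<lambda>_. borel::real measure))"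
  unfolding cu_def by (cases "j \<in> I") auto

lemma pred_cu[measurable]:
  "Measurable.pred (PiM I (\<lambda>_. lborel::real measure)) (\<lambda>x. cu I c j x \<le> cu I c' k x)"
  "Measurable.pred (PiM I (\<lambda>_. borel::real measure)) (\<lambda>x. cu I c j x \<le> cu I c' k x)"
  unfolding pred_def by (rule borel_measurable_le; rule meas_cu1 meas_cu2)+

lemma Sset_eq:
  "Sset n a y = {x \<in> space (PiM {1..n} (\<lambda>_. lborel::real measure)).
     (\<forall>j\<in>{1..n}. 0 \<le> x j \<and> x j \<le> a) \<and>
     (\<forall>j\<in>{2..Suc n}. (even j \<longrightarrow> cu {1..n} y j x \<le> cu {1..n} y (j-1) x)
        \<and> (odd j \<longrightarrow> cu {1..n} y (j-1) x \<le> cu {1..n} y j x))}"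
proof -
  have e: "(\<forall>j\<in>{2..Suc n}. (even j \<longrightarrow> cu {1..n} y j x \<le> cu {1..n} y (j-1) x)
        \<and> (odd j \<longrightarrow> cu {1..n} y (j-1) x \<le> cu {1..n} y j x)) = alternating (Suc n) (x(Suc n := y))" for x
    unfolding alternating_def
  proof (intro ball_cong refl)
    fix j assume j: "j \<in> {2..Suc n}"
    have e1: "cu {1..n} y j x = (x(Suc n := y)) j"
      using j by (cases "j = Suc n") (auto simp: cu_def)
    have e2: "cu {1..n} y (j-1) x = (x(Suc n := y)) (j-1)"
      using j by (auto simp: cu_def)
    show "((even j \<longrightarrow> cu {1..n} y j x \<le> cu {1..n} y (j-1) x) \<and> (odd j \<longrightarrow> cu {1..n} y (j-1) x \<le> cu {1..n} y j x))
       = ((even j \<longrightarrow> (x(Suc n := y)) j \<le> (x(Suc n := y)) (j - 1)) \<and> (odd j \<longrightarrow> (x(Suc n := y)) (j - 1) \<le> (x(Suc n := y)) j))"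
      by (simp only: e1 e2)
  qed
  show ?thesis unfolding Sset_def e space_PiM
    by (auto simp: PiE_iff)
qed

lemma Sset_sets[measurable]: "Sset n a y \<in> sets (PiM {1..n} (\<lambda>_. lborel::real measure))"
  unfolding Sset_eq by measurable

lemma alternating_Suc:
  "alternating (Suc m) f \<longleftrightarrow> alternating m f \<and>
     (m \<ge> 1 \<longrightarrow> (even (Suc m) \<longrightarrow> f (Suc m) \<le> f m) \<and> (odd (Suc m) \<longrightarrow> f m \<le> f (Suc m)))"
proof (cases "m = 0")
  case True
  then show ?thesis unfolding alternating_def by simp
next
  case False
  have "{2..Suc m} = insert (Suc m) {2..m}" using False by auto
  then show ?thesis unfolding alternating_def using False
    apply simp
    apply (rule iffI)
     apply (elim conjE, intro conjI, assumption+)+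
    done
qed

lemma alternating_cong:
  assumes "\<And>j. j \<le> m \<Longrightarrow> f j = g j"
  shows "alternating m f = alternating m g"
proof -
  have *: "\<And>j. j \<in> {2..m} \<Longrightarrow> f j = g j \<and> f (j-1) = g (j-1)" using assms by auto
  show ?thesis unfolding alternating_def
  proof (rule ball_cong[OF refl])
    fix j assume "j \<in> {2..m}"
    then have e1: "f j = g j" and e2: "f (j-1) = g (j-1)" using * by auto
    show "((even j \<longrightarrow> f j \<le> f (j - 1)) \<and> (odd j \<longrightarrow> f (j - 1) \<le> f j)) =
          ((even j \<longrightarrow> g j \<le> g (j - 1)) \<and> (odd j \<longrightarrow> g (j - 1) \<le> g j))"
      by (simp only: e1 e2)
  qed
qed

fun G :: "(real \<Rightarrow> real) \<Rightarrow> real \<Rightarrow> nat \<Rightarrow> real \<Rightarrow> real" where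
  "G r a 0 y = 1"
| "G r a (Suc n) y = integral (if even n then {y..a} else {0..y}) (\<lambda>z. r z * G r a n z)"

lemma int_upper:
  fixes f :: "real \<Rightarrow> real"
  assumes "f integrable_on {0..a}" "y \<in> {0..a}"
  shows "integral {y..a} f = integral {0..a} f - integral {0..y} f"
  using Henstock_Kurzweil_Integration.integral_combine[where a=0 and c=y and b=a and f=f] assms by auto

lemma G_cont:
  assumes r: "continuous_on UNIV r"
  shows "continuous_on {0..a} (G r a n)"
proof (induction n)
  case 0
  then show ?case by simp
next
  case (Suc n)
  have c: "continuous_on {0..a} (\<lambda>z. r z * G r a n z)"
    by (rule continuous_on_mult[OF continuous_on_subset[OF r subset_UNIV] Suc.IH])
  hence int: "(\<lambda>z. r z * G r a n z) integrable_on {0..a}"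
    by (rule integrable_continuous_interval)
  have ci: "continuous_on {0..a} (\<lambda>y. integral {0..y} (\<lambda>z. r z * G r a n z))"
    by (rule indefinite_integral_continuous_1[OF int])
  show ?case
  proof (cases "even n")
    case True
    have "continuous_on {0..a} (\<lambda>y. integral {0..a} (\<lambda>z. r z * G r a n z) - integral {0..y} (\<lambda>z. r z * G r a n z))"
      by (rule continuous_on_diff[OF continuous_on_const ci])
    then show ?thesis
      by (rule continuous_on_eq) (simp add: True int_upper[OF int, symmetric])
  next
    case False
    then show ?thesis using ci by simp
  qed
qed

lemma G_nonneg:
  assumes r: "continuous_on UNIV r" and rp: "\<And>z. r z \<ge> 0" and y: "y \<in> {0..a}"
  shows "G r a n y \<ge> 0"
  using y
proof (induction n arbitrary: y)
  case 0
  then show ?case by simp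
next
  case (Suc n)
  have c: "continuous_on {0..a} (\<lambda>z. r z * G r a n z)"
    by (rule continuous_on_mult[OF continuous_on_subset[OF r subset_UNIV] G_cont[OF r]])
  hence int: "(\<lambda>z. r z * G r a n z) integrable_on {0..a}"
    by (rule integrable_continuous_interval)
  have sub: "(if even n then {y..a} else {0..y}) \<subseteq> {0..a}" using Suc.prems by auto
  have "integral (if even n then {y..a} else {0..y}) (\<lambda>z. r z * G r a n z) \<ge> 0"
  proof (rule integral_nonneg)
    show "(\<lambda>z. r z * G r a n z) integrable_on (if even n then {y..a} else {0..y})"
      using integrable_subinterval_real[OF int] sub by (cases "even n") auto
    show "\<And>x. x \<in> (if even n then {y..a} else {0..y}) \<Longrightarrow> 0 \<le> r x * G r a n x"
      using sub by (intro mult_nonneg_nonneg rp Suc.IH) auto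
  qed
  then show ?case by simp
qed

lemma G_int:
  assumes r: "continuous_on UNIV r" and y: "y \<in> {0..a}"
  shows "((\<lambda>z. r z * G r a n z) has_integral G r a (Suc n) y) (if even n then {y..a} else {0..y})"
proof -
  have c: "continuous_on {0..a} (\<lambda>z. r z * G r a n z)"
    by (rule continuous_on_mult[OF continuous_on_subset[OF r subset_UNIV] G_cont[OF r]])
  hence int: "(\<lambda>z. r z * G r a n z) integrable_on {0..a}"
    by (rule integrable_continuous_interval)
  have sub: "(if even n then {y..a} else {0..y}) \<subseteq> {0..a}" using y by auto
  have "(\<lambda>z. r z * G r a n z) integrable_on (if even n then {y..a} else {0..y})"
    using integrable_subinterval_real[OF int] sub by (cases "even n") auto
  then show ?thesis by (simp add: integrable_integral)
qed

lemma Sset_step: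
  assumes x: "x \<in> space (PiM {1..n} (\<lambda>_. lborel::real measure))" and y: "y \<in> {0..a}"
  shows "indicator (Sset (Suc n) a y) (x(Suc n := z)) =
     (indicator (if even n then {y..a} else {0..y}) z * indicator (Sset n a z) x :: real)"
proof -
  have xe: "x \<in> extensional {1..n}" using x by (simp add: space_PiM PiE_def)
  have alt: "alternating (Suc (Suc n)) (x(Suc n := z, Suc (Suc n) := y)) \<longleftrightarrow>
      alternating (Suc n) (x(Suc n := z)) \<and> (even n \<longrightarrow> y \<le> z) \<and> (odd n \<longrightarrow> z \<le> y)"
    by (subst alternating_Suc, subst alternating_cong[where g="x(Suc n := z)"]) auto
  have pie: "x(Suc n := z) \<in> PiE {1..Suc n} (\<lambda>_. {0..a}) \<longleftrightarrow> x \<in> PiE {1..n} (\<lambda>_. {0..a}) \<and> z \<in> {0..a}"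
    using xe by (auto simp: PiE_def Pi_def extensional_def)
  have "x(Suc n := z) \<in> Sset (Suc n) a y \<longleftrightarrow> z \<in> (if even n then {y..a} else {0..y}) \<and> x \<in> Sset n a z"
    unfolding Sset_def using pie alt y by (auto simp: fun_upd_twist)
  then show ?thesis by (auto simp: indicator_def)
qed

lemma nnG:
  assumes r: "continuous_on UNIV r" and rp: "\<And>z. r z \<ge> 0" and y: "y \<in> {0..a}"
  shows "(\<integral>\<^sup>+x. ennreal (indicator (Sset n a y) x * (\<Prod>j\<in>{1..n}. r (x j))) \<partial>PiM {1..n} (\<lambda>_. lborel))
          = ennreal (G r a n y)"
  using y
proof (induction n arbitrary: y)
  case 0
  then show ?case
    by (simp add: PiM_empty nn_integral_count_space_finite Sset_def alternating_def)
next
  case (Suc n)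
  interpret product_sigma_finite "\<lambda>_. lborel::real measure" by standard
  have rm[measurable]: "r \<in> borel_measurable borel"
    using r by (simp add: borel_measurable_continuous_onI)
  let ?J = "if even n then {y..a} else {0..y}"
  have ins: "{1..Suc n} = insert (Suc n) {1..n}" by auto
  have "(\<integral>\<^sup>+x. ennreal (indicator (Sset (Suc n) a y) x * (\<Prod>j\<in>{1..Suc n}. r (x j))) \<partial>PiM {1..Suc n} (\<lambda>_. lborel))
     = (\<integral>\<^sup>+z. (\<integral>\<^sup>+x. ennreal (indicator (Sset (Suc n) a y) (x(Suc n := z)) * (\<Prod>j\<in>{1..Suc n}. r ((x(Suc n := z)) j)))
            \<partial>PiM {1..n} (\<lambda>_. lborel)) \<partial>lborel)"
  proof -
    have meas: "(\<lambda>x. ennreal (indicator (Sset (Suc n) a y) x * (\<Prod>j\<in>{1..Suc n}. r (x j))))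
       \<in> borel_measurable (PiM {1..Suc n} (\<lambda>_. lborel))"
      by measurable
    show ?thesis using meas unfolding ins by (intro product_nn_integral_insert_rev) auto
  qed
  also have "\<dots> = (\<integral>\<^sup>+z. (\<integral>\<^sup>+x. ennreal (indicator ?J z * r z) * ennreal (indicator (Sset n a z) x * (\<Prod>j\<in>{1..n}. r (x j)))
            \<partial>PiM {1..n} (\<lambda>_. lborel)) \<partial>lborel)"
  proof (intro nn_integral_cong)
    fix z x assume x: "x \<in> space (PiM {1..n} (\<lambda>_. lborel::real measure))"
    have p: "(\<Prod>j\<in>{1..Suc n}. r ((x(Suc n := z)) j)) = r z * (\<Prod>j\<in>{1..n}. r (x j))"
      unfolding ins by (simp add: prod.insert)
    show "ennreal (indicator (Sset (Suc n) a y) (x(Suc n := z)) * (\<Prod>j\<in>{1..Suc n}. r ((x(Suc n := z)) j))) =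
          ennreal (indicator ?J z * r z) * ennreal (indicator (Sset n a z) x * (\<Prod>j\<in>{1..n}. r (x j)))"
      unfolding p Sset_step[OF x Suc.prems]
      by (subst ennreal_mult[symmetric]) (auto intro!: mult_nonneg_nonneg rp prod_nonneg simp: mult_ac)
  qed
  also have "\<dots> = (\<integral>\<^sup>+z. ennreal (indicator ?J z * r z) * ennreal (G r a n z) \<partial>lborel)"
  proof (intro nn_integral_cong)
    fix z :: real
    show "(\<integral>\<^sup>+x. ennreal (indicator ?J z * r z) * ennreal (indicator (Sset n a z) x * (\<Prod>j\<in>{1..n}. r (x j)))
            \<partial>PiM {1..n} (\<lambda>_. lborel)) = ennreal (indicator ?J z * r z) * ennreal (G r a n z)"
    proof (cases "z \<in> ?J")
      case True
      hence z: "z \<in> {0..a}" using Suc.prems by (auto split: if_splits)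
      have m: "(\<lambda>x. ennreal (indicator (Sset n a z) x * (\<Prod>j\<in>{1..n}. r (x j))))
         \<in> borel_measurable (PiM {1..n} (\<lambda>_. lborel))"
        by measurable
      show ?thesis
        by (simp only: nn_integral_cmult[OF m] Suc.IH[OF z])
    next
      case False
      then show ?thesis by simp
    qed
  qed
  also have "\<dots> = (\<integral>\<^sup>+z. ennreal (indicator ?J z * (r z * G r a n z)) \<partial>lborel)"
  proof (intro nn_integral_cong)
    fix z :: real
    show "ennreal (indicator ?J z * r z) * ennreal (G r a n z) = ennreal (indicator ?J z * (r z * G r a n z))"
    proof (cases "z \<in> ?J")
      case True
      hence z: "z \<in> {0..a}" using Suc.prems by (auto split: if_splits)
      show ?thesis using True G_nonneg[OF r rp z, of n] rp[of z]
        by (simp add: ennreal_mult[symmetric])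
    qed simp
  qed
  also have "\<dots> = ennreal (G r a (Suc n) y)"
  proof (rule nn_integral_has_integral_lebesgue)
    show "((\<lambda>z. r z * G r a n z) has_integral G r a (Suc n) y) ?J" by (rule G_int[OF r Suc.prems])
    fix z assume "z \<in> ?J"
    hence z: "z \<in> {0..a}" using Suc.prems by (auto split: if_splits)
    show "0 \<le> r z * G r a n z" using G_nonneg[OF r rp z, of n] rp[of z] by simp
  qed
  finally show ?case .
qed

lemma G_deriv:
  assumes r: "continuous_on UNIV r" and y: "y \<in> {0..a}"
  shows "(G r a (Suc n) has_real_derivative (if even n then - (r y * G r a n y) else r y * G r a n y))
           (at y within {0..a})"
proof -
  let ?f = "\<lambda>z. r z * G r a n z"
  have c: "continuous_on {0..a} ?f"
    by (rule continuous_on_mult[OF continuous_on_subset[OF r subset_UNIV] G_cont[OF r]])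
  hence int: "?f integrable_on {0..a}"
    by (rule integrable_continuous_interval)
  have d: "((\<lambda>u. integral {0..u} ?f) has_real_derivative ?f y) (at y within {0..a})"
    unfolding has_real_derivative_iff_has_vector_derivative
    by (rule integral_has_vector_derivative[OF c y])
  show ?thesis
  proof (cases "even n")
    case True
    have d2: "((\<lambda>u. integral {0..a} ?f - integral {0..u} ?f) has_real_derivative - ?f y) (at y within {0..a})"
      using DERIV_diff[OF DERIV_const d] by simp
    show ?thesis using True
      by (simp only: if_True) (rule has_field_derivative_transform_within[OF d2 zero_less_one y],
            simp add: int_upper[OF int, symmetric])
  next
    case False
    have e: "G r a (Suc n) = (\<lambda>u. integral {0..u} ?f)" using False by (simp add: fun_eq_iff)
    show ?thesis using d False unfolding e by simp
  qed
qed


declare G.simps(2)[simp del]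

context
  fixes q :: "real \<Rightarrow> real" and a L :: real
  assumes qc: "continuous_on UNIV q" and qp: "\<And>z. q z \<ge> 0" and a: "a > 0"
    and L: "L = integral {0..a} q"
begin

definition "Rf y = integral {0..y} q"

lemma q_int: "q integrable_on {0..a}"
  by (rule integrable_continuous_interval) (rule continuous_on_subset[OF qc], auto)

lemma Rf_deriv: "y \<in> {0..a} \<Longrightarrow> (Rf has_real_derivative q y) (at y within {0..a})"
  unfolding Rf_def using integral_has_vector_derivative[OF continuous_on_subset[OF qc] , of 0 a y]
  by (simp add: has_real_derivative_iff_has_vector_derivative)

lemma Rf_bounds: "y \<in> {0..a} \<Longrightarrow> 0 \<le> Rf y \<and> Rf y \<le> L"
proof -
  assume y: "y \<in> {0..a}"
  have i1: "q integrable_on {0..y}" "q integrable_on {y..a}"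
    using integrable_subinterval_real[OF q_int] y by auto
  have "0 \<le> integral {0..y} q" by (rule integral_nonneg[OF i1(1)]) (simp add: qp)
  moreover have "0 \<le> integral {y..a} q" by (rule integral_nonneg[OF i1(2)]) (simp add: qp)
  ultimately show ?thesis unfolding Rf_def L using int_upper[OF q_int y] by simp
qed

lemma Rf0: "Rf 0 = 0" unfolding Rf_def by simp
lemma Rfa: "Rf a = L" unfolding Rf_def L by simp

lemma L_nonneg: "L \<ge> 0" using Rf_bounds[of 0] a by auto

lemma G_int_q: "y \<in> {0..a} \<Longrightarrow> ((\<lambda>z. q z * G q a n z) has_integral G q a (Suc n) y) (if even n then {y..a} else {0..y})"
  by (rule G_int[OF qc])

lemma Gq_nonneg: "y \<in> {0..a} \<Longrightarrow> G q a n y \<ge> 0"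
  by (rule G_nonneg[OF qc qp])

lemma Gq_deriv: "y \<in> {0..a} \<Longrightarrow> (G q a (Suc n) has_real_derivative (if even n then - (q y * G q a n y) else q y * G q a n y))
           (at y within {0..a})"
  by (rule G_deriv[OF qc])

definition "ct y = cos (L - Rf y) / cos L"
definition "st y = sin (L - Rf y) / cos L"

lemma LR_deriv: "y \<in> {0..a} \<Longrightarrow> ((\<lambda>y. L - Rf y) has_real_derivative 0 - q y) (at y within {0..a})"
  by (rule DERIV_diff[OF DERIV_const Rf_deriv])

lemma ct_deriv: "y \<in> {0..a} \<Longrightarrow> (ct has_real_derivative q y * st y) (at y within {0..a})"
proof -
  assume y: "y \<in> {0..a}"
  have d: "((\<lambda>x. cos (L - Rf x) / cos L) has_real_derivative (- sin (L - Rf y)) * (0 - q y) / cos L) (at y within {0..a})"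
    by (rule DERIV_cdivide[OF DERIV_chain2[OF DERIV_cos LR_deriv[OF y]]])
  have eq: "(- sin (L - Rf y)) * (0 - q y) / cos L = q y * st y"
    unfolding st_def by (simp add: divide_inverse mult_ac)
  show ?thesis unfolding ct_def by (rule DERIV_cong[OF d eq])
qed

lemma st_deriv: "y \<in> {0..a} \<Longrightarrow> ((\<lambda>y. - st y) has_real_derivative q y * ct y) (at y within {0..a})"
proof -
  assume y: "y \<in> {0..a}"
  have d: "((\<lambda>x. - (sin (L - Rf x) / cos L)) has_real_derivative - (cos (L - Rf y) * (0 - q y) / cos L)) (at y within {0..a})"
    by (rule DERIV_minus[OF DERIV_cdivide[OF DERIV_chain2[OF DERIV_sin LR_deriv[OF y]]]])
  have eq: "- (cos (L - Rf y) * (0 - q y) / cos L) = q y * ct y"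
    unfolding ct_def by (simp add: divide_inverse mult_ac)
  show ?thesis unfolding st_def by (rule DERIV_cong[OF d eq])
qed

lemma ct0: "L < pi/2 \<Longrightarrow> ct 0 = 1" unfolding ct_def Rf0 using cos_gt_zero_pi[of L] L_nonneg by simp
lemma sta: "st a = 0" unfolding st_def Rfa by simp

lemma FT_sub:
  fixes f f' :: "real \<Rightarrow> real"
  assumes "\<And>y. y \<in> {0..a} \<Longrightarrow> (f has_real_derivative f' y) (at y within {0..a})"
    and "u \<le> v" "{u..v} \<subseteq> {0..a}"
  shows "(f' has_integral (f v - f u)) {u..v}"
proof (rule fundamental_theorem_of_calculus[OF assms(2)])
  fix x assume x: "x \<in> {u..v}"
  have "(f has_real_derivative f' x) (at x within {0..a})" using assms(1,3) x by auto
  then have "(f has_real_derivative f' x) (at x within {u..v})" by (rule DERIV_subset) (use assms in auto)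
  then show "(f has_vector_derivative f' x) (at x within {u..v})"
    by (simp add: has_real_derivative_iff_has_vector_derivative)
qed

lemma bounds:
  assumes Lpi: "L < pi/2"
  shows "\<forall>y\<in>{0..a}. (\<Sum>m<N. G q a (2*m) y) \<le> ct y \<and> (\<Sum>m<N. G q a (2*m+1) y) \<le> st y"
proof (induction N)
  case 0
  have cL: "cos L > 0" using cos_gt_zero_pi[of L] L_nonneg Lpi by simp
  show ?case
  proof
    fix y assume y: "y \<in> {0..a}"
    have "0 \<le> L - Rf y" "L - Rf y \<le> L" using Rf_bounds[OF y] by auto
    hence "cos (L - Rf y) > 0" "sin (L - Rf y) \<ge> 0"
      using cos_gt_zero_pi[of "L - Rf y"] sin_ge_zero[of "L - Rf y"] Lpi by auto
    thus "(\<Sum>m<0. G q a (2*m) y) \<le> ct y \<and> (\<Sum>m<0. G q a (2*m+1) y) \<le> st y"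
      unfolding ct_def st_def using cL by simp
  qed
next
  case (Suc N)
  have A: "(\<Sum>m<Suc N. G q a (2*m) y) \<le> ct y" if y: "y \<in> {0..a}" for y
  proof -
    have "((\<lambda>z. \<Sum>m<N. q z * G q a (2*m+1) z) has_integral (\<Sum>m<N. G q a (Suc (2*m+1)) y)) {0..y}"
    proof (rule has_integral_sum)
      fix m show "((\<lambda>z. q z * G q a (2*m+1) z) has_integral G q a (Suc (2*m+1)) y) {0..y}"
        using G_int_q[OF y, of "2*m+1"] by simp
    qed simp
    moreover have "((\<lambda>z. q z * st z) has_integral (ct y - ct 0)) {0..y}"
      by (rule FT_sub[OF ct_deriv]) (use y in auto)
    ultimately have "(\<Sum>m<N. G q a (Suc (2*m+1)) y) \<le> ct y - ct 0"
    proof (rule has_integral_le)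
      fix z assume z: "z \<in> {0..y}"
      hence z': "z \<in> {0..a}" using y by auto
      have "(\<Sum>m<N. q z * G q a (2*m+1) z) = q z * (\<Sum>m<N. G q a (2*m+1) z)"
        by (simp only: sum_distrib_left)
      also have "\<dots> \<le> q z * st z" using Suc.IH z' qp[of z] by (intro mult_left_mono) auto
      finally show "(\<Sum>m<N. q z * G q a (2*m+1) z) \<le> q z * st z" .
    qed
    moreover have "(\<Sum>m<Suc N. G q a (2*m) y) = 1 + (\<Sum>m<N. G q a (Suc (2*m+1)) y)"
      by (subst sum.lessThan_Suc_shift) simp
    ultimately show ?thesis using ct0[OF Lpi] by simp
  qed
  have B: "(\<Sum>m<Suc N. G q a (2*m+1) y) \<le> st y" if y: "y \<in> {0..a}" for y
  proof -
    have "((\<lambda>z. \<Sum>m<Suc N. q z * G q a (2*m) z) has_integral (\<Sum>m<Suc N. G q a (Suc (2*m)) y)) {y..a}"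
    proof (rule has_integral_sum)
      fix m show "((\<lambda>z. q z * G q a (2*m) z) has_integral G q a (Suc (2*m)) y) {y..a}"
        using G_int_q[OF y, of "2*m"] by simp
    qed simp
    moreover have "((\<lambda>z. q z * ct z) has_integral ((- st a) - (- st y))) {y..a}"
      by (rule FT_sub[OF st_deriv]) (use y in auto)
    ultimately have "(\<Sum>m<Suc N. G q a (Suc (2*m)) y) \<le> (- st a) - (- st y)"
    proof (rule has_integral_le)
      fix z assume z: "z \<in> {y..a}"
      hence z': "z \<in> {0..a}" using y by auto
      have "(\<Sum>m<Suc N. q z * G q a (2*m) z) = q z * (\<Sum>m<Suc N. G q a (2*m) z)"
        by (simp only: sum_distrib_left)
      also have "\<dots> \<le> q z * ct z" using A[OF z'] qp[of z] by (intro mult_left_mono) auto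
      finally show "(\<Sum>m<Suc N. q z * G q a (2*m) z) \<le> q z * ct z" .
    qed
    then show ?thesis using sta by simp
  qed
  show ?case using A B by auto
qed

lemma summable_even:
  assumes Lpi: "L < pi/2"
  shows "summable (\<lambda>m. G q a (2*m) a)"
proof (rule summableI_nonneg_bounded)
  show "\<And>m. 0 \<le> G q a (2*m) a" using Gq_nonneg a by simp
  show "(\<Sum>m<N. G q a (2*m) a) \<le> ct a" for N using bounds[OF Lpi, of N] a by auto
qed

lemma Geven_lim:
  assumes Lpi: "L < pi/2"
  shows "(\<lambda>M. G q a (Suc (2*M+1)) a) \<longlonglongrightarrow> 0"
proof -
  have "(\<lambda>m. G q a (2*m) a) \<longlonglongrightarrow> 0" by (rule summable_LIMSEQ_zero[OF summable_even[OF Lpi]])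
  hence "(\<lambda>M. G q a (2*(Suc M)) a) \<longlonglongrightarrow> 0" by (rule LIMSEQ_Suc)
  thus ?thesis by simp
qed

definition "cch y = cosh (L - Rf y) / cosh L"
definition "ssh y = sinh (L - Rf y) / cosh L"

lemma cch_deriv: "y \<in> {0..a} \<Longrightarrow> (cch has_real_derivative - (q y * ssh y)) (at y within {0..a})"
proof -
  assume y: "y \<in> {0..a}"
  have d: "((\<lambda>x. cosh (L - Rf x) / cosh L) has_real_derivative sinh (L - Rf y) * (0 - q y) / cosh L) (at y within {0..a})"
    by (rule DERIV_cdivide[OF has_field_derivative_cosh[OF LR_deriv[OF y]]])
  have eq: "sinh (L - Rf y) * (0 - q y) / cosh L = - (q y * ssh y)"
    unfolding ssh_def by (simp add: divide_inverse mult_ac)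
  show ?thesis unfolding cch_def by (rule DERIV_cong[OF d eq])
qed

lemma ssh_deriv: "y \<in> {0..a} \<Longrightarrow> (ssh has_real_derivative - (q y * cch y)) (at y within {0..a})"
proof -
  assume y: "y \<in> {0..a}"
  have d: "((\<lambda>x. sinh (L - Rf x) / cosh L) has_real_derivative cosh (L - Rf y) * (0 - q y) / cosh L) (at y within {0..a})"
    by (rule DERIV_cdivide[OF has_field_derivative_sinh[OF LR_deriv[OF y]]])
  have eq: "cosh (L - Rf y) * (0 - q y) / cosh L = - (q y * cch y)"
    unfolding cch_def by (simp add: divide_inverse mult_ac)
  show ?thesis unfolding ssh_def by (rule DERIV_cong[OF d eq])
qed

lemma cch_ssh_bounds: "y \<in> {0..a} \<Longrightarrow> 0 \<le> cch y \<and> cch y \<le> 1 \<and> 0 \<le> ssh y \<and> ssh y \<le> 1"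
proof -
  assume y: "y \<in> {0..a}"
  have h: "0 \<le> L - Rf y" "L - Rf y \<le> L" using Rf_bounds[OF y] by auto
  have "cosh (L - Rf y) \<le> cosh L" using h L_nonneg by (simp add: cosh_real_nonneg_le_iff)
  moreover have "sinh (L - Rf y) \<le> cosh L" using h sinh_le_cosh_real[of L] by (smt (verit) sinh_real_le_iff)
  moreover have "0 \<le> sinh (L - Rf y)" using h by simp
  moreover have "0 < cosh (L - Rf y)" by simp
  ultimately show ?thesis unfolding cch_def ssh_def by (simp add: divide_le_eq_1)
qed

definition "AA M y = (\<Sum>m<Suc M. (-1)^m * G q a (2*m) y)"
definition "BB M y = (\<Sum>m<M. (-1)^m * G q a (2*m+1) y)"

lemma AA_deriv: "y \<in> {0..a} \<Longrightarrow> (AA M has_real_derivative - (q y * BB M y)) (at y within {0..a})"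
proof -
  assume y: "y \<in> {0..a}"
  have e: "AA M = (\<lambda>y. 1 + (\<Sum>k<M. (-1)^(Suc k) * G q a (Suc (2*k+1)) y))"
    unfolding AA_def by (rule ext, subst sum.lessThan_Suc_shift) simp
  have "((\<lambda>y. 1 + (\<Sum>k<M. (-1)^(Suc k) * G q a (Suc (2*k+1)) y)) has_real_derivative
           0 + (\<Sum>k<M. (-1)^(Suc k) * (q y * G q a (2*k+1) y))) (at y within {0..a})"
  proof (intro DERIV_add DERIV_const DERIV_sum DERIV_cmult)
    fix k show "(G q a (Suc (2*k+1)) has_real_derivative q y * G q a (2*k+1) y) (at y within {0..a})"
      using Gq_deriv[OF y, of "2*k+1"] by simp
  qed
  moreover have "0 + (\<Sum>k<M. (-1)^(Suc k) * (q y * G q a (2*k+1) y)) = - (q y * BB M y)"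
    unfolding BB_def by (simp add: sum_distrib_left sum_negf[symmetric] mult_ac)
  ultimately show ?thesis unfolding e by simp
qed

lemma BB_deriv: "y \<in> {0..a} \<Longrightarrow> (BB (Suc M) has_real_derivative - (q y * AA M y)) (at y within {0..a})"
proof -
  assume y: "y \<in> {0..a}"
  have e: "BB (Suc M) = (\<lambda>y. (\<Sum>m<Suc M. (-1)^m * G q a (Suc (2*m)) y))"
    unfolding BB_def by simp
  have "((\<lambda>y. (\<Sum>m<Suc M. (-1)^m * G q a (Suc (2*m)) y)) has_real_derivative
           (\<Sum>m<Suc M. (-1)^m * (- (q y * G q a (2*m) y)))) (at y within {0..a})"
  proof (intro DERIV_sum DERIV_cmult)
    fix k show "(G q a (Suc (2*k)) has_real_derivative - (q y * G q a (2*k) y)) (at y within {0..a})"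
      using Gq_deriv[OF y, of "2*k"] by simp
  qed
  moreover have "(\<Sum>m<Suc M. (-1)^m * (- (q y * G q a (2*m) y))) = - (q y * AA M y)"
    unfolding AA_def sum_distrib_left sum_negf[symmetric] by (rule sum.cong) (simp_all add: algebra_simps)
  ultimately show ?thesis unfolding e by simp
qed

lemma AA0: "AA M 0 = 1"
proof -
  have "AA M 0 = 1 + (\<Sum>k<M. (-1)^(Suc k) * G q a (Suc (2*k+1)) 0)"
    unfolding AA_def by (subst sum.lessThan_Suc_shift) simp
  also have "\<dots> = 1" by (simp add: G.simps)
  finally show ?thesis .
qed

lemma BBa: "BB M a = 0"
  unfolding BB_def by (simp add: G.simps)

lemma err_bound:
  assumes "(D has_integral I) {0..a}" "\<And>z. z \<in> {0..a} \<Longrightarrow> \<bar>D z\<bar> \<le> q z * G q a (2*M+1) z"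
  shows "\<bar>I\<bar> \<le> G q a (Suc (2*M+1)) a"
proof -
  have g: "((\<lambda>z. q z * G q a (2*M+1) z) has_integral G q a (Suc (2*M+1)) a) {0..a}"
    using G_int_q[of a "2*M+1"] a by simp
  have "I \<le> G q a (Suc (2*M+1)) a"
    by (rule has_integral_le[OF assms(1) g]) (use assms(2) in force)
  moreover have "- G q a (Suc (2*M+1)) a \<le> I"
    by (rule has_integral_le[OF has_integral_neg[OF g] assms(1)]) (use assms(2) in force)
  ultimately show ?thesis by simp
qed

lemma key_identities:
  shows "\<bar>BB (Suc M) 0 - tanh L\<bar> \<le> G q a (Suc (2*M+1)) a"
    and "\<bar>AA M a / cosh L - (1 - BB (Suc M) 0 * tanh L)\<bar> \<le> G q a (Suc (2*M+1)) a"
proof -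
  have BBS: "BB (Suc M) y = BB M y + (-1)^M * G q a (2*M+1) y" for y
    unfolding BB_def by simp
  let ?Phi = "\<lambda>y. AA M y * ssh y - BB (Suc M) y * cch y"
  let ?Psi = "\<lambda>y. AA M y * cch y - BB (Suc M) y * ssh y"
  have dPhi: "(?Phi has_real_derivative (-1)^M * (q y * ssh y * G q a (2*M+1) y)) (at y within {0..a})"
    if y: "y \<in> {0..a}" for y
  proof -
    have "(?Phi has_real_derivative
       (- (q y * BB M y)) * ssh y + (- (q y * cch y)) * AA M y -
       ((- (q y * AA M y)) * cch y + (- (q y * ssh y)) * BB (Suc M) y)) (at y within {0..a})"
      by (rule DERIV_diff[OF DERIV_mult[OF AA_deriv[OF y] ssh_deriv[OF y]] DERIV_mult[OF BB_deriv[OF y] cch_deriv[OF y]]])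
    moreover have "(- (q y * BB M y)) * ssh y + (- (q y * cch y)) * AA M y -
       ((- (q y * AA M y)) * cch y + (- (q y * ssh y)) * BB (Suc M) y) =
       (-1)^M * (q y * ssh y * G q a (2*M+1) y)"
      unfolding BBS by (simp add: algebra_simps)
    ultimately show ?thesis by simp
  qed
  have dPsi: "(?Psi has_real_derivative (-1)^M * (q y * cch y * G q a (2*M+1) y)) (at y within {0..a})"
    if y: "y \<in> {0..a}" for y
  proof -
    have "(?Psi has_real_derivative
       (- (q y * BB M y)) * cch y + (- (q y * ssh y)) * AA M y -
       ((- (q y * AA M y)) * ssh y + (- (q y * cch y)) * BB (Suc M) y)) (at y within {0..a})"
      by (rule DERIV_diff[OF DERIV_mult[OF AA_deriv[OF y] cch_deriv[OF y]] DERIV_mult[OF BB_deriv[OF y] ssh_deriv[OF y]]])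
    moreover have "(- (q y * BB M y)) * cch y + (- (q y * ssh y)) * AA M y -
       ((- (q y * AA M y)) * ssh y + (- (q y * cch y)) * BB (Suc M) y) =
       (-1)^M * (q y * cch y * G q a (2*M+1) y)"
      unfolding BBS by (simp add: algebra_simps)
    ultimately show ?thesis by simp
  qed
  have vals: "ssh 0 = tanh L" "cch 0 = 1" "ssh a = 0" "cch a = 1 / cosh L"
    unfolding ssh_def cch_def Rf0 Rfa by (simp_all add: tanh_def)
  have iPhi: "((\<lambda>y. (-1)^M * (q y * ssh y * G q a (2*M+1) y)) has_integral (?Phi a - ?Phi 0)) {0..a}"
    by (rule FT_sub[OF dPhi]) (use a in auto)
  have iPsi: "((\<lambda>y. (-1)^M * (q y * cch y * G q a (2*M+1) y)) has_integral (?Psi a - ?Psi 0)) {0..a}"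
    by (rule FT_sub[OF dPsi]) (use a in auto)
  have b1: "\<bar>?Phi a - ?Phi 0\<bar> \<le> G q a (Suc (2*M+1)) a"
  proof (rule err_bound[OF iPhi])
    fix z assume z: "z \<in> {0..a}"
    have "\<bar>(-1)^M * (q z * ssh z * G q a (2*M+1) z)\<bar> = q z * ssh z * G q a (2*M+1) z"
      using cch_ssh_bounds[OF z] Gq_nonneg[OF z, of "2*M+1"] qp[of z] by (simp add: abs_mult)
    also have "\<dots> \<le> q z * 1 * G q a (2*M+1) z"
      using cch_ssh_bounds[OF z] Gq_nonneg[OF z, of "2*M+1"] qp[of z]
      by (intro mult_right_mono mult_left_mono) auto
    finally show "\<bar>(-1)^M * (q z * ssh z * G q a (2*M+1) z)\<bar> \<le> q z * G q a (2*M+1) z" by simp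
  qed
  have b2: "\<bar>?Psi a - ?Psi 0\<bar> \<le> G q a (Suc (2*M+1)) a"
  proof (rule err_bound[OF iPsi])
    fix z assume z: "z \<in> {0..a}"
    have "\<bar>(-1)^M * (q z * cch z * G q a (2*M+1) z)\<bar> = q z * cch z * G q a (2*M+1) z"
      using cch_ssh_bounds[OF z] Gq_nonneg[OF z, of "2*M+1"] qp[of z] by (simp add: abs_mult)
    also have "\<dots> \<le> q z * 1 * G q a (2*M+1) z"
      using cch_ssh_bounds[OF z] Gq_nonneg[OF z, of "2*M+1"] qp[of z]
      by (intro mult_right_mono mult_left_mono) auto
    finally show "\<bar>(-1)^M * (q z * cch z * G q a (2*M+1) z)\<bar> \<le> q z * G q a (2*M+1) z" by simp
  qed
  show "\<bar>BB (Suc M) 0 - tanh L\<bar> \<le> G q a (Suc (2*M+1)) a"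
    using b1 unfolding vals AA0 BBa by (simp add: abs_minus_commute)
  show "\<bar>AA M a / cosh L - (1 - BB (Suc M) 0 * tanh L)\<bar> \<le> G q a (Suc (2*M+1)) a"
    using b2 unfolding vals AA0 BBa by simp
qed

lemma series_q:
  assumes Lpi: "L < pi/2"
  shows "(\<lambda>m. (-1)^m * G q a (2*m+1) 0) sums tanh L"
    and "(\<lambda>m. (-1)^m * G q a (2*m) a) sums (1 / cosh L)"
proof -
  have e: "(\<lambda>M. G q a (Suc (2*M+1)) a) \<longlonglongrightarrow> 0" by (rule Geven_lim[OF Lpi])
  have "(\<lambda>M. BB (Suc M) 0 - tanh L) \<longlonglongrightarrow> 0"
    by (rule Lim_null_comparison[OF _ e]) (use key_identities(1) in simp)
  hence bl: "(\<lambda>M. BB (Suc M) 0) \<longlonglongrightarrow> tanh L"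
    using Lim_null tendsto_add_const_iff by (metis (no_types) LIM_zero_cancel)
  hence "(\<lambda>M. BB M 0) \<longlonglongrightarrow> tanh L" by (rule LIMSEQ_imp_Suc)
  thus "(\<lambda>m. (-1)^m * G q a (2*m+1) 0) sums tanh L"
    unfolding sums_def BB_def by simp
  have "(\<lambda>M. AA M a / cosh L - (1 - BB (Suc M) 0 * tanh L)) \<longlonglongrightarrow> 0"
    by (rule Lim_null_comparison[OF _ e]) (use key_identities(2) in simp)
  moreover have "(\<lambda>M. 1 - BB (Suc M) 0 * tanh L) \<longlonglongrightarrow> 1 - tanh L * tanh L"
    by (intro tendsto_intros bl)
  ultimately have "(\<lambda>M. (AA M a / cosh L - (1 - BB (Suc M) 0 * tanh L)) + (1 - BB (Suc M) 0 * tanh L))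
      \<longlonglongrightarrow> 0 + (1 - tanh L * tanh L)"
    by (rule tendsto_add)
  hence "(\<lambda>M. AA M a / cosh L) \<longlonglongrightarrow> 1 - tanh L * tanh L" by simp
  hence "(\<lambda>M. cosh L * (AA M a / cosh L)) \<longlonglongrightarrow> cosh L * (1 - tanh L * tanh L)"
    by (intro tendsto_intros)
  moreover have "cosh L * (1 - tanh L * tanh L) = 1 / cosh L"
  proof -
    have c: "cosh L \<noteq> 0" by simp
    have "cosh L * (1 - tanh L * tanh L) = (cosh L ^ 2 - sinh L ^ 2) / cosh L"
      using c by (simp add: tanh_def field_simps power2_eq_square)
    also have "\<dots> = 1 / cosh L" using cosh_square_eq[of L] by simp
    finally show ?thesis .
  qed
  ultimately have "(\<lambda>M. AA M a) \<longlonglongrightarrow> 1 / cosh L"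
    by simp
  show "(\<lambda>m. (-1)^m * G q a (2*m) a) sums (1 / cosh L)"
    unfolding sums_def
    apply (rule LIMSEQ_imp_Suc)
    using \<open>(\<lambda>M. AA M a) \<longlonglongrightarrow> 1 / cosh L\<close> unfolding AA_def by simp
qed

end



lemma altset_eq:
  "altset n a = {x \<in> space (PiM {1..n} (\<lambda>_. lborel::real measure)).
     (\<forall>j\<in>{1..n}. 0 \<le> x j \<and> x j \<le> a) \<and>
     (\<forall>j\<in>{2..n}. (even j \<longrightarrow> cu {1..n} 0 j x \<le> cu {1..n} 0 (j-1) x)
        \<and> (odd j \<longrightarrow> cu {1..n} 0 (j-1) x \<le> cu {1..n} 0 j x))}"
proof -
  have e: "(\<forall>j\<in>{2..n}. (even j \<longrightarrow> cu {1..n} 0 j x \<le> cu {1..n} 0 (j-1) x)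
        \<and> (odd j \<longrightarrow> cu {1..n} 0 (j-1) x \<le> cu {1..n} 0 j x)) = alternating n x" for x
    unfolding alternating_def
  proof (intro ball_cong refl)
    fix j assume "j \<in> {2..n}"
    hence "cu {1..n} 0 j x = x j" "cu {1..n} 0 (j-1) x = x (j-1)" by (auto simp: cu_def)
    thus "((even j \<longrightarrow> cu {1..n} 0 j x \<le> cu {1..n} 0 (j-1) x) \<and> (odd j \<longrightarrow> cu {1..n} 0 (j-1) x \<le> cu {1..n} 0 j x))
       = ((even j \<longrightarrow> x j \<le> x (j - 1)) \<and> (odd j \<longrightarrow> x (j - 1) \<le> x j))" by simp
  qed
  show ?thesis unfolding altset_def e space_PiM
    by (auto simp: PiE_def Pi_def extensional_def)
qed

lemma altset_sets[measurable]: "altset n a \<in> sets (PiM {1..n} (\<lambda>_. lborel::real measure))"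
  unfolding altset_eq by measurable

lemma altset_step:
  assumes x: "x \<in> space (PiM {1..n} (\<lambda>_. lborel::real measure))"
  shows "indicator (altset (Suc n) a) (x(Suc n := z)) =
     (indicator {0..a} z * indicator (Sset n a z) x :: real)"
proof -
  have xe: "x \<in> extensional {1..n}" using x by (simp add: space_PiM PiE_def)
  have pie: "x(Suc n := z) \<in> PiE {1..Suc n} (\<lambda>_. {0..a}) \<longleftrightarrow> x \<in> PiE {1..n} (\<lambda>_. {0..a}) \<and> z \<in> {0..a}"
    using xe by (auto simp: PiE_def Pi_def extensional_def)
  have "x(Suc n := z) \<in> altset (Suc n) a \<longleftrightarrow> z \<in> {0..a} \<and> x \<in> Sset n a z"
    unfolding Sset_def altset_def using pie by auto
  then show ?thesis by (auto simp: indicator_def)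
qed

lemma alt_nn:
  assumes r: "continuous_on UNIV r" and rp: "\<And>z. r z \<ge> 0" and a: "a \<ge> 0"
  shows "(\<integral>\<^sup>+x. ennreal (indicator (altset (Suc n) a) x * (\<Prod>j\<in>{1..Suc n}. r (x j))) \<partial>PiM {1..Suc n} (\<lambda>_. lborel))
          = ennreal (integral {0..a} (\<lambda>z. r z * G r a n z))"
proof -
  interpret product_sigma_finite "\<lambda>_. lborel::real measure" by standard
  have rm[measurable]: "r \<in> borel_measurable borel"
    using r by (simp add: borel_measurable_continuous_onI)
  have ins: "{1..Suc n} = insert (Suc n) {1..n}" by auto
  have c: "continuous_on {0..a} (\<lambda>z. r z * G r a n z)"
    by (rule continuous_on_mult[OF continuous_on_subset[OF r subset_UNIV] G_cont[OF r]])
  have "(\<integral>\<^sup>+x. ennreal (indicator (altset (Suc n) a) x * (\<Prod>j\<in>{1..Suc n}. r (x j))) \<partial>PiM {1..Suc n} (\<lambda>_. lborel))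
     = (\<integral>\<^sup>+z. (\<integral>\<^sup>+x. ennreal (indicator (altset (Suc n) a) (x(Suc n := z)) * (\<Prod>j\<in>{1..Suc n}. r ((x(Suc n := z)) j)))
            \<partial>PiM {1..n} (\<lambda>_. lborel)) \<partial>lborel)"
  proof -
    have meas: "(\<lambda>x. ennreal (indicator (altset (Suc n) a) x * (\<Prod>j\<in>{1..Suc n}. r (x j))))
       \<in> borel_measurable (PiM {1..Suc n} (\<lambda>_. lborel))"
      by measurable
    show ?thesis using meas unfolding ins by (intro product_nn_integral_insert_rev) auto
  qed
  also have "\<dots> = (\<integral>\<^sup>+z. (\<integral>\<^sup>+x. ennreal (indicator {0..a} z * r z) * ennreal (indicator (Sset n a z) x * (\<Prod>j\<in>{1..n}. r (x j)))
            \<partial>PiM {1..n} (\<lambda>_. lborel)) \<partial>lborel)"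
  proof (intro nn_integral_cong)
    fix z x assume x: "x \<in> space (PiM {1..n} (\<lambda>_. lborel::real measure))"
    have p: "(\<Prod>j\<in>{1..Suc n}. r ((x(Suc n := z)) j)) = r z * (\<Prod>j\<in>{1..n}. r (x j))"
      unfolding ins by (simp add: prod.insert)
    show "ennreal (indicator (altset (Suc n) a) (x(Suc n := z)) * (\<Prod>j\<in>{1..Suc n}. r ((x(Suc n := z)) j))) =
          ennreal (indicator {0..a} z * r z) * ennreal (indicator (Sset n a z) x * (\<Prod>j\<in>{1..n}. r (x j)))"
      unfolding p altset_step[OF x]
      by (subst ennreal_mult[symmetric]) (auto intro!: mult_nonneg_nonneg rp prod_nonneg simp: mult_ac)
  qed
  also have "\<dots> = (\<integral>\<^sup>+z. ennreal (indicator {0..a} z * r z) * ennreal (G r a n z) \<partial>lborel)"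
  proof (intro nn_integral_cong)
    fix z :: real
    show "(\<integral>\<^sup>+x. ennreal (indicator {0..a} z * r z) * ennreal (indicator (Sset n a z) x * (\<Prod>j\<in>{1..n}. r (x j)))
            \<partial>PiM {1..n} (\<lambda>_. lborel)) = ennreal (indicator {0..a} z * r z) * ennreal (G r a n z)"
    proof (cases "z \<in> {0..a}")
      case True
      have m: "(\<lambda>x. ennreal (indicator (Sset n a z) x * (\<Prod>j\<in>{1..n}. r (x j))))
         \<in> borel_measurable (PiM {1..n} (\<lambda>_. lborel))"
        by measurable
      show ?thesis
        by (simp only: nn_integral_cmult[OF m] nnG[OF r rp True])
    next
      case False
      then show ?thesis by simp
    qed
  qed
  also have "\<dots> = (\<integral>\<^sup>+z. ennreal (indicator {0..a} z * (r z * G r a n z)) \<partial>lborel)"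
  proof (intro nn_integral_cong)
    fix z :: real
    show "ennreal (indicator {0..a} z * r z) * ennreal (G r a n z) = ennreal (indicator {0..a} z * (r z * G r a n z))"
    proof (cases "z \<in> {0..a}")
      case True
      show ?thesis using True G_nonneg[OF r rp True, of n] rp[of z]
        by (simp add: ennreal_mult[symmetric])
    qed simp
  qed
  also have "\<dots> = ennreal (integral {0..a} (\<lambda>z. r z * G r a n z))"
  proof (rule nn_integral_has_integral_lebesgue)
    show "((\<lambda>z. r z * G r a n z) has_integral integral {0..a} (\<lambda>z. r z * G r a n z)) {0..a}"
      using integrable_continuous_interval[OF c] by (simp add: integrable_integral)
    fix z assume z: "z \<in> {0..a}"
    show "0 \<le> r z * G r a n z" using G_nonneg[OF r rp z, of n] rp[of z] by simp
  qed
  finally show ?thesis .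
qed

lemma alt_int:
  assumes r: "continuous_on UNIV r" and rp: "\<And>z. r z \<ge> 0" and a: "a \<ge> 0"
  shows "(LINT x : altset (Suc n) a | PiM {1..Suc n} (\<lambda>_. lborel). (\<Prod>j=1..Suc n. r (x j)))
          = integral {0..a} (\<lambda>z. r z * G r a n z)"
proof -
  have rm[measurable]: "r \<in> borel_measurable borel"
    using r by (simp add: borel_measurable_continuous_onI)
  have c: "continuous_on {0..a} (\<lambda>z. r z * G r a n z)"
    by (rule continuous_on_mult[OF continuous_on_subset[OF r subset_UNIV] G_cont[OF r]])
  have nn: "0 \<le> integral {0..a} (\<lambda>z. r z * G r a n z)"
    using integrable_continuous_interval[OF c]
    by (rule integral_nonneg) (use G_nonneg[OF r rp] rp in auto)
  have "(LINT x : altset (Suc n) a | PiM {1..Suc n} (\<lambda>_. lborel). (\<Prod>j=1..Suc n. r (x j)))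
      = enn2real (\<integral>\<^sup>+x. ennreal (indicator (altset (Suc n) a) x * (\<Prod>j\<in>{1..Suc n}. r (x j))) \<partial>PiM {1..Suc n} (\<lambda>_. lborel))"
  proof -
    have meas: "(\<lambda>x. indicator (altset (Suc n) a) x * (\<Prod>j\<in>{1..Suc n}. r (x j)))
       \<in> borel_measurable (PiM {1..Suc n} (\<lambda>_. lborel))"
      by measurable
    have "(LINT x : altset (Suc n) a | PiM {1..Suc n} (\<lambda>_. lborel). (\<Prod>j=1..Suc n. r (x j)))
       = integral\<^sup>L (PiM {1..Suc n} (\<lambda>_. lborel)) (\<lambda>x. indicator (altset (Suc n) a) x * (\<Prod>j\<in>{1..Suc n}. r (x j)))"
      unfolding set_lebesgue_integral_def by simp
    also have "\<dots> = enn2real (\<integral>\<^sup>+x. ennreal (indicator (altset (Suc n) a) x * (\<Prod>j\<in>{1..Suc n}. r (x j))) \<partial>PiM {1..Suc n} (\<lambda>_. lborel))"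
      by (rule integral_eq_nn_integral[OF meas]) (intro AE_I2 mult_nonneg_nonneg prod_nonneg rp; simp)
    finally show ?thesis .
  qed
  also have "\<dots> = integral {0..a} (\<lambda>z. r z * G r a n z)"
    unfolding alt_nn[OF r rp a] using nn by simp
  finally show ?thesis .
qed

lemma const_left:
  fixes f :: "real \<Rightarrow> real"
  assumes "continuous_on UNIV f" "\<forall>x<b. f x = c"
  shows "f b = c"
proof -
  have "isCont f b" using assms(1) by (simp add: continuous_on_eq_continuous_at)
  hence l1: "(f \<longlongrightarrow> f b) (at_left b)" using filterlim_at_split isCont_def by blast
  have ev: "eventually (\<lambda>x. c = f x) (at_left b)"
    unfolding eventually_at_filter by (rule always_eventually) (use assms(2) in auto)
  have l2: "(f \<longlongrightarrow> c) (at_left b)" by (rule iffD1[OF tendsto_cong[OF ev] tendsto_const])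
  show ?thesis using tendsto_unique[OF trivial_limit_at_left_real l1 l2] .
qed

lemma const_right:
  fixes f :: "real \<Rightarrow> real"
  assumes "continuous_on UNIV f" "\<forall>x>b. f x = c"
  shows "f b = c"
proof -
  have "isCont f b" using assms(1) by (simp add: continuous_on_eq_continuous_at)
  hence l1: "(f \<longlongrightarrow> f b) (at_right b)" using filterlim_at_split isCont_def by blast
  have ev: "eventually (\<lambda>x. c = f x) (at_right b)"
    unfolding eventually_at_filter by (rule always_eventually) (use assms(2) in auto)
  have l2: "(f \<longlongrightarrow> c) (at_right b)" by (rule iffD1[OF tendsto_cong[OF ev] tendsto_const])
  show ?thesis using tendsto_unique[OF trivial_limit_at_right_real l1 l2] .
qed

lemma mono_deriv_nonneg:
  fixes f :: "real \<Rightarrow> real"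
  assumes m: "mono_on {0..b} f" and b: "b > 0" and x: "x \<in> {0..b}"
    and d: "(f has_real_derivative D) (at x within {0..b})"
  shows "D \<ge> 0"
proof (rule ccontr)
  assume "\<not> D \<ge> 0"
  hence D: "D < 0" by simp
  show False
  proof (cases "x < b")
    case True
    obtain e where e: "e > 0" "\<And>h. h > 0 \<Longrightarrow> x + h \<in> {0..b} \<Longrightarrow> h < e \<Longrightarrow> f x > f (x + h)"
      using has_real_derivative_neg_dec_right[OF d D] by blast
    define h where "h = min (e/2) (b - x)"
    have h: "h > 0" "h < e" "x + h \<in> {0..b}" using e True x by (auto simp: h_def)
    have "f x \<le> f (x + h)" using m x h by (intro mono_onD[OF m]) auto
    with e(2)[OF h(1) h(3) h(2)] show False by simp
  next
    case False
    hence xb: "x = b" using x by auto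
    obtain e where e: "e > 0" "\<And>h. h > 0 \<Longrightarrow> x - h \<in> {0..b} \<Longrightarrow> h < e \<Longrightarrow> f x < f (x - h)"
      using has_real_derivative_neg_dec_left[OF d D] by blast
    define h where "h = min (e/2) b"
    have h: "h > 0" "h < e" "x - h \<in> {0..b}" using e b xb by (auto simp: h_def)
    have "f (x - h) \<le> f x" using m x h by (intro mono_onD[OF m]) auto
    with e(2)[OF h(1) h(3) h(2)] show False by simp
  qed
qed

lemma LINT_scale:
  fixes f g :: "(nat \<Rightarrow> real) \<Rightarrow> real"
  assumes "\<And>x. x \<in> A \<Longrightarrow> f x = c * g x"
  shows "(LINT x:A|M. f x) = c * (LINT x:A|M. g x)"
proof -
  have "(LINT x:A|M. f x) = integral\<^sup>L M (\<lambda>x. c * (indicator A x *\<^sub>R g x))"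
    unfolding set_lebesgue_integral_def
    by (rule Bochner_Integration.integral_cong) (auto simp: assms indicator_def)
  also have "\<dots> = c * (LINT x:A|M. g x)"
    unfolding set_lebesgue_integral_def by simp
  finally show ?thesis .
qed






lemma that_bound:
  assumes "\<And>j. j \<in> {1..n} \<Longrightarrow> \<bar>\<tau> (x j)\<bar> \<le> B"
  shows "that \<tau> n x \<le> 2 * real n * B"
proof -
  have "(\<Sum>j=1..n. (-1::real) ^ (j + 1) * \<tau> (x j)) \<le> \<bar>\<Sum>j=1..n. (-1::real) ^ (j + 1) * \<tau> (x j)\<bar>"
    by simp
  also have "\<dots> \<le> (\<Sum>j=1..n. \<bar>(-1::real) ^ (j + 1) * \<tau> (x j)\<bar>)" by (rule sum_abs)
  also have "\<dots> \<le> (\<Sum>j=1..n. B)" by (rule sum_mono) (simp add: abs_mult assms)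
  also have "\<dots> = real n * B" by simp
  finally show ?thesis unfolding that_def by linarith
qed

lemma altset_range: "x \<in> altset n a \<Longrightarrow> j \<in> {1..n} \<Longrightarrow> x j \<in> {0..a}"
  unfolding altset_def by (auto simp: PiE_def Pi_def)

lemma sg_pow_even: "(sg::real) * sg = 1 \<Longrightarrow> sg ^ (2 * m) = 1"
  by (simp add: power_mult power2_eq_square)

theorem mainTheorem3:
  fixes K \<rho> :: "real \<Rightarrow> real" and xp Km \<rho>m Kp \<rho>p :: real
  defines "Z \<equiv> \<lambda>x. sqrt (K x * \<rho> x)"
    and "c \<equiv> \<lambda>x. sqrt (K x / \<rho> x)"
    and "Zm \<equiv> sqrt (Km * \<rho>m)" and "Zp \<equiv> sqrt (Kp * \<rho>p)"
    and "cm \<equiv> sqrt (Km / \<rho>m)"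
    and "CG \<equiv> sqrt (sqrt (Kp * \<rho>p) / sqrt (Km * \<rho>m))"
    and "r \<equiv> \<lambda>x. vector_derivative (\<lambda>y. sqrt (K y * \<rho> y)) (at x within {0..xp})
                 / (2 * sqrt (K x * \<rho> x))"
    and "p0 \<equiv> \<lambda>\<xi>::real. if \<xi> \<le> 0 then (1::real) else 0"
  assumes xp_pos: "xp > 0"
    and K_pos: "\<forall>x. K x > 0" and \<rho>_pos: "\<forall>x. \<rho> x > 0"
    and K_cont: "continuous_on UNIV K" and \<rho>_cont: "continuous_on UNIV \<rho>"
    and left: "\<forall>x<0. K x = Km \<and> \<rho> x = \<rho>m"
    and right: "\<forall>x>xp. K x = Kp \<and> \<rho> x = \<rho>p"
    and K_C1: "\<exists>K'. (\<forall>x\<in>{0..xp}. (K has_real_derivative K' x) (at x within {0..xp}))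
                     \<and> continuous_on {0..xp} K'"
    and \<rho>_C1: "\<exists>\<rho>'. (\<forall>x\<in>{0..xp}. (\<rho> has_real_derivative \<rho>' x) (at x within {0..xp}))
                     \<and> continuous_on {0..xp} \<rho>'"
    and Z_mono: "mono_on {0..xp} Z \<or> antimono_on {0..xp} Z"
    and ratio_lo: "exp (- pi) < Zp / Zm" and ratio_hi: "Zp / Zm < exp pi"
  shows "\<exists>Tinf Rinf :: nat \<Rightarrow> real.
           (\<forall>m. ((\<lambda>t. Tcoef p0 cm CG (tau c) r xp m t) \<longlongrightarrow> Tinf m) at_top)
         \<and> (\<forall>m. ((\<lambda>t. Rcoef p0 cm (tau c) r xp m t) \<longlongrightarrow> Rinf m) at_top)
         \<and> Tinf sums (2 * Zp / (Zm + Zp))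
         \<and> Rinf sums ((Zp - Zm) / (Zm + Zp))
         \<and> 2 * Zp / (Zm + Zp) = CG / cosh (ln CG)
         \<and> (Zp - Zm) / (Zm + Zp) = tanh (ln CG)"
proof -
  have Km: "Km > 0" and \<rho>m: "\<rho>m > 0"
    using left K_pos \<rho>_pos by (metis neg_less_0_iff_less zero_less_one)+
  have Kp: "Kp > 0" and \<rho>p: "\<rho>p > 0"
  proof -
    have "xp + 1 > xp" by simp
    thus "Kp > 0" "\<rho>p > 0" using right K_pos \<rho>_pos by metis+
  qed
  have K0: "K 0 = Km" by (rule const_left[OF K_cont]) (use left in auto)
  have \<rho>0: "\<rho> 0 = \<rho>m" by (rule const_left[OF \<rho>_cont]) (use left in auto)
  have Kxp: "K xp = Kp" by (rule const_right[OF K_cont]) (use right in auto)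
  have \<rho>xp: "\<rho> xp = \<rho>p" by (rule const_right[OF \<rho>_cont]) (use right in auto)
  have Zm_pos: "Zm > 0" unfolding Zm_def using Km \<rho>m by simp
  have Zp_pos: "Zp > 0" unfolding Zp_def using Kp \<rho>p by simp
  have cm_pos: "cm > 0" unfolding cm_def using Km \<rho>m by simp
  have P_pos: "\<And>x. K x * \<rho> x > 0" using K_pos \<rho>_pos by simp
  have sP_pos: "\<And>x. sqrt (K x * \<rho> x) > 0" using P_pos by simp
  obtain K' where K': "\<forall>x\<in>{0..xp}. (K has_real_derivative K' x) (at x within {0..xp})"
      and K'c: "continuous_on {0..xp} K'" using K_C1 by blast
  obtain \<rho>' where \<rho>': "\<forall>x\<in>{0..xp}. (\<rho> has_real_derivative \<rho>' x) (at x within {0..xp})"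
      and \<rho>'c: "continuous_on {0..xp} \<rho>'" using \<rho>_C1 by blast
  define Zd where "Zd x = inverse (sqrt (K x * \<rho> x)) / 2 * (K' x * \<rho> x + \<rho>' x * K x)" for x
  have dZ: "((\<lambda>y. sqrt (K y * \<rho> y)) has_real_derivative Zd x) (at x within {0..xp})"
    if x: "x \<in> {0..xp}" for x
  proof -
    have dP: "((\<lambda>y. K y * \<rho> y) has_real_derivative K' x * \<rho> x + \<rho>' x * K x) (at x within {0..xp})"
      using DERIV_mult[OF K'[rule_format, OF x] \<rho>'[rule_format, OF x]] .
    show ?thesis unfolding Zd_def
      by (rule DERIV_chain2[OF DERIV_real_sqrt[OF P_pos] dP])
  qed
  define rr where "rr x = Zd x / (2 * sqrt (K x * \<rho> x))" for x
  have r_rr: "r x = rr x" if x: "x \<in> {0..xp}" for x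
  proof -
    have "vector_derivative (\<lambda>y. sqrt (K y * \<rho> y)) (at x within {0..xp}) = Zd x"
      by (rule vector_derivative_within_closed_interval[OF xp_pos x])
         (use dZ[OF x] in \<open>simp add: has_real_derivative_iff_has_vector_derivative\<close>)
    thus ?thesis unfolding r_def rr_def by simp
  qed
  have Kc: "continuous_on {0..xp} K" by (rule continuous_on_subset[OF K_cont subset_UNIV])
  have \<rho>c: "continuous_on {0..xp} \<rho>" by (rule continuous_on_subset[OF \<rho>_cont subset_UNIV])
  have Pc: "continuous_on {0..xp} (\<lambda>x. K x * \<rho> x)" by (rule continuous_on_mult[OF Kc \<rho>c])
  have sPc: "continuous_on {0..xp} (\<lambda>x. sqrt (K x * \<rho> x))" by (rule continuous_on_real_sqrt[OF Pc])
  have isPc: "continuous_on {0..xp} (\<lambda>x. inverse (sqrt (K x * \<rho> x)))"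
    by (rule continuous_on_inverse[OF sPc]) (use sP_pos in \<open>metis less_irrefl\<close>)
  have Zdc: "continuous_on {0..xp} Zd"
    unfolding Zd_def
    by (intro continuous_on_mult continuous_on_divide continuous_on_add continuous_on_const isPc K'c \<rho>'c Kc \<rho>c) auto
  have rrc: "continuous_on {0..xp} rr"
    unfolding rr_def
    by (intro continuous_on_divide continuous_on_mult continuous_on_const Zdc sPc)
       (use sP_pos in \<open>metis less_irrefl mult_eq_0_iff zero_neq_numeral\<close>)
  define L where "L = ln CG"
  have CG_eq: "CG = sqrt (Zp / Zm)" unfolding CG_def Zp_def Zm_def by simp
  have CG_pos: "CG > 0" unfolding CG_eq using Zp_pos Zm_pos by simp
  have L_eq: "L = (ln Zp - ln Zm) / 2"
    unfolding L_def CG_eq using Zp_pos Zm_pos by (simp add: ln_sqrt ln_div)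
  have rr_int: "(rr has_integral L) {0..xp}"
  proof -
    define F where "F y = ln (sqrt (K y * \<rho> y)) / 2" for y
    have dF: "(F has_real_derivative rr x) (at x within {0..xp})" if x: "x \<in> {0..xp}" for x
    proof -
      have d: "(F has_real_derivative inverse (sqrt (K x * \<rho> x)) * Zd x / 2) (at x within {0..xp})"
        unfolding F_def by (rule DERIV_cdivide[OF DERIV_chain2[OF DERIV_ln[OF sP_pos] dZ[OF x]]])
      have "inverse (sqrt (K x * \<rho> x)) * Zd x / 2 = rr x"
        using sP_pos[of x] unfolding rr_def by (simp add: field_simps)
      with d show ?thesis by simp
    qed
    have "(rr has_integral (F xp - F 0)) {0..xp}"
      by (rule fundamental_theorem_of_calculus) (use xp_pos dF in \<open>auto simp: has_real_derivative_iff_has_vector_derivative\<close>)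
    moreover have "F xp - F 0 = L"
      unfolding F_def L_eq Zp_def Zm_def using Kxp \<rho>xp K0 \<rho>0 by (simp add: diff_divide_distrib)
    ultimately show ?thesis by simp
  qed
  have L_bound: "\<bar>L\<bar> < pi / 2"
  proof -
    have q0: "Zp / Zm > 0" using Zp_pos Zm_pos by simp
    have "ln (Zp / Zm) < ln (exp pi)" using ratio_hi q0 by (subst ln_less_cancel_iff) auto
    moreover have "ln (exp (- pi)) < ln (Zp / Zm)" using ratio_lo q0 by (subst ln_less_cancel_iff) auto
    moreover have "ln (Zp / Zm) = ln Zp - ln Zm" using Zp_pos Zm_pos by (simp add: ln_div)
    ultimately show ?thesis unfolding L_eq by simp
  qed
  define sg :: real where "sg = (if mono_on {0..xp} Z then 1 else -1)"
  have sg2: "sg * sg = 1" unfolding sg_def by simp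
  have sg_rr: "sg * rr x \<ge> 0" if x: "x \<in> {0..xp}" for x
  proof (cases "mono_on {0..xp} Z")
    case True
    have "Zd x \<ge> 0"
      by (rule mono_deriv_nonneg[OF _ xp_pos x dZ[OF x]]) (use True in \<open>simp add: Z_def\<close>)
    then show ?thesis unfolding sg_def rr_def using True sP_pos[of x] by simp
  next
    case False
    hence anti: "antimono_on {0..xp} Z" using Z_mono by simp
    have m: "mono_on {0..xp} (\<lambda>y. - sqrt (K y * \<rho> y))"
      using anti unfolding Z_def monotone_on_def by auto
    have "- Zd x \<ge> 0"
      by (rule mono_deriv_nonneg[OF m xp_pos x DERIV_minus[OF dZ[OF x]]])
    then show ?thesis unfolding sg_def rr_def using False sP_pos[of x]
      by (simp add: divide_nonpos_pos)
  qed
  define cl where "cl x = max 0 (min xp x)" for x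
  have cl_in: "cl x \<in> {0..xp}" for x unfolding cl_def using xp_pos by auto
  have cl_id: "x \<in> {0..xp} \<Longrightarrow> cl x = x" for x unfolding cl_def by auto
  define q where "q x = sg * rr (cl x)" for x
  have qc: "continuous_on UNIV q"
  proof -
    have "continuous_on UNIV cl" unfolding cl_def by (intro continuous_intros)
    hence "continuous_on UNIV (\<lambda>x. rr (cl x))"
      by (rule continuous_on_compose2[OF rrc]) (use cl_in in auto)
    thus ?thesis unfolding q_def by (rule continuous_on_mult[OF continuous_on_const])
  qed
  have qp: "\<And>z. q z \<ge> 0" unfolding q_def using sg_rr cl_in by blast
  have r_q: "r x = sg * q x" if x: "x \<in> {0..xp}" for x
    unfolding q_def cl_id[OF x] r_rr[OF x] using sg2 by (simp add: mult.assoc[symmetric])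
  define Lq where "Lq = integral {0..xp} q"
  have Lq_eq: "Lq = sg * L"
  proof -
    have "Lq = integral {0..xp} (\<lambda>x. sg * rr x)"
      unfolding Lq_def q_def by (rule integral_cong) (simp add: cl_id)
    also have "\<dots> = sg * integral {0..xp} rr" using integral_cmul[of "{0..xp}" sg rr] by simp
    also have "\<dots> = sg * L" using rr_int by (simp add: integral_unique)
    finally show ?thesis .
  qed
  have Lq_pi: "Lq < pi / 2" using L_bound unfolding Lq_eq sg_def by auto
  note ser = series_q[OF qc qp xp_pos Lq_def Lq_pi]
  have Iint: "(LINT x : altset (Suc n) xp | PiM {1..Suc n} (\<lambda>_. lborel). (\<Prod>j=1..Suc n. r (x j)))
       = sg ^ Suc n * integral {0..xp} (\<lambda>z. q z * G q xp n z)" for n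
  proof -
    have "(LINT x : altset (Suc n) xp | PiM {1..Suc n} (\<lambda>_. lborel). (\<Prod>j=1..Suc n. r (x j)))
       = sg ^ Suc n * (LINT x : altset (Suc n) xp | PiM {1..Suc n} (\<lambda>_. lborel). (\<Prod>j=1..Suc n. q (x j)))"
    proof (rule LINT_scale)
      fix x assume x: "x \<in> altset (Suc n) xp"
      have "(\<Prod>j=1..Suc n. r (x j)) = (\<Prod>j=1..Suc n. sg * q (x j))"
        by (rule prod.cong[OF refl]) (use r_q altset_range[OF x] in auto)
      also have "\<dots> = sg ^ Suc n * (\<Prod>j=1..Suc n. q (x j))" by (simp add: prod.distrib)
      finally show "(\<Prod>j=1..Suc n. r (x j)) = sg ^ Suc n * (\<Prod>j=1..Suc n. q (x j))" .
    qed
    also have "\<dots> = sg ^ Suc n * integral {0..xp} (\<lambda>z. q z * G q xp n z)"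
      using alt_int[OF qc qp, of xp n] xp_pos by simp
    finally show ?thesis .
  qed
  have Iodd: "(LINT x : altset (2 * m + 1) xp | PiM {1..2 * m + 1} (\<lambda>_. lborel). (\<Prod>j=1..2 * m + 1. r (x j)))
       = sg * G q xp (2 * m + 1) 0" for m
  proof -
    have "integral {0..xp} (\<lambda>z. q z * G q xp (2*m) z) = G q xp (Suc (2*m)) 0" by (simp add: G.simps)
    moreover have "sg ^ Suc (2*m) = sg" using sg_pow_even[OF sg2, of m] by simp
    ultimately show ?thesis using Iint[of "2*m"] by simp
  qed
  have Ieven: "(LINT x : altset (2 * m) xp | PiM {1..2 * m} (\<lambda>_. lborel). (\<Prod>j=1..2 * m. r (x j)))
       = G q xp (2 * m) xp" if m: "m \<noteq> 0" for m
  proof -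
    obtain k where k: "m = Suc k" using m not0_implies_Suc by blast
    have e: "2 * m = Suc (2*k+1)" using k by simp
    have "integral {0..xp} (\<lambda>z. q z * G q xp (2*k+1) z) = G q xp (Suc (2*k+1)) xp" by (simp add: G.simps)
    moreover have "sg ^ Suc (2*k+1) = 1" using sg_pow_even[OF sg2, of "Suc k"] by simp
    ultimately show ?thesis unfolding e using Iint[of "2*k+1"] by simp
  qed
  have cpos: "\<And>s. c s > 0" unfolding c_def using K_pos \<rho>_pos by simp
  obtain B where B: "\<And>y. y \<in> {0..xp} \<Longrightarrow> \<bar>tau c y\<bar> \<le> B" and B0: "B \<ge> 0"
  proof -
    have cc: "continuous_on {0..xp} c" unfolding c_def
      by (intro continuous_on_real_sqrt continuous_on_divide Kc \<rho>c) (use \<rho>_pos in \<open>metis less_irrefl\<close>)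
    have ic: "continuous_on {0..xp} (\<lambda>s. 1 / c s)"
      by (rule continuous_on_divide[OF continuous_on_const cc]) (use cpos in \<open>metis less_irrefl\<close>)
    have "continuous_on {0..xp} (tau c)"
      unfolding tau_def by (rule indefinite_integral_continuous_1[OF integrable_continuous_interval[OF ic]])
    hence "compact (tau c ` {0..xp})" by (rule compact_continuous_image) simp
    hence "bounded (tau c ` {0..xp})" by (rule compact_imp_bounded)
    then obtain B0 where "\<forall>y\<in>tau c ` {0..xp}. \<bar>y\<bar> \<le> B0" unfolding bounded_real by blast
    hence "\<And>y. y \<in> {0..xp} \<Longrightarrow> \<bar>tau c y\<bar> \<le> max B0 0" by force
    then show ?thesis using that[of "max B0 0"] by simp
  qed
  have tau0: "tau c 0 = 0" unfolding tau_def by simp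
  have that_b: "that (tau c) n x \<le> 2 * real n * B" if "x \<in> altset n xp" for n x
    by (rule that_bound) (use B altset_range[OF that] in blast)
  have p0_one: "p0 \<xi> = 1" if "\<xi> \<le> 0" for \<xi> unfolding p0_def using that by simp
  define Tinf where "Tinf m = (-1) ^ m * CG * G q xp (2 * m) xp" for m
  define Rinf where "Rinf m = sg * ((-1) ^ m * G q xp (2 * m + 1) 0)" for m
  have Rlim: "((\<lambda>t. Rcoef p0 cm (tau c) r xp m t) \<longlongrightarrow> Rinf m) at_top" for m
  proof (rule tendsto_eventually, unfold eventually_at_top_linorder, intro exI allI impI)
    fix t assume t: "t \<ge> 2 * real (2*m+1) * B"
    have "(LINT x : altset (2 * m + 1) xp | PiM {1..2 * m + 1} (\<lambda>_. lborel).
        p0 (xiR cm (tau c) (2 * m + 1) x 0 t) * (\<Prod>j=1..2 * m + 1. r (x j)))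
      = 1 * (LINT x : altset (2 * m + 1) xp | PiM {1..2 * m + 1} (\<lambda>_. lborel). (\<Prod>j=1..2 * m + 1. r (x j)))"
    proof (rule LINT_scale)
      fix x assume x: "x \<in> altset (2 * m + 1) xp"
      have h: "that (tau c) (2 * m + 1) x \<le> t" using that_b[OF x] t by linarith
      have "0 \<le> cm * (t - that (tau c) (2 * m + 1) x)" using h cm_pos by (intro mult_nonneg_nonneg) auto
      hence "xiR cm (tau c) (2 * m + 1) x 0 t \<le> 0"
        unfolding xiR_def tau0 by simp
      thus "p0 (xiR cm (tau c) (2 * m + 1) x 0 t) * (\<Prod>j=1..2 * m + 1. r (x j)) = 1 * (\<Prod>j=1..2 * m + 1. r (x j))"
        using p0_one by simp
    qed
    thus "Rcoef p0 cm (tau c) r xp m t = Rinf m"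
      unfolding Rcoef_def Rinf_def Iodd by simp
  qed
  have Tlim: "((\<lambda>t. Tcoef p0 cm CG (tau c) r xp m t) \<longlongrightarrow> Tinf m) at_top" for m
  proof (rule tendsto_eventually, unfold eventually_at_top_linorder, intro exI allI impI)
    fix t assume t: "t \<ge> (2 * real (2*m) + 1) * B"
    show "Tcoef p0 cm CG (tau c) r xp m t = Tinf m"
    proof (cases "m = 0")
      case True
      have tB: "tau c xp \<le> B" using B[of xp] xp_pos by (simp add: abs_le_iff)
      have "tau c xp \<le> t" using t tB True by simp
      hence "0 \<le> cm * (t - tau c xp)" using cm_pos by (intro mult_nonneg_nonneg) auto
      hence "- cm * (t - tau c xp) \<le> 0" by simp
      thus ?thesis unfolding Tcoef_def Tinf_def using True p0_one by (simp add: G.simps)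
    next
      case False
      have "(LINT x : altset (2 * m) xp | PiM {1..2 * m} (\<lambda>_. lborel).
          p0 (xiT cm (tau c) (2 * m) x xp t) * (\<Prod>j=1..2 * m. r (x j)))
        = 1 * (LINT x : altset (2 * m) xp | PiM {1..2 * m} (\<lambda>_. lborel). (\<Prod>j=1..2 * m. r (x j)))"
      proof (rule LINT_scale)
        fix x assume x: "x \<in> altset (2 * m) xp"
        have tB: "tau c xp \<le> B" using B[of xp] xp_pos by (simp add: abs_le_iff)
        have e: "(2 * real (2*m) + 1) * B = 2 * real (2*m) * B + B" by (simp add: algebra_simps)
        have h: "that (tau c) (2 * m) x + tau c xp \<le> t" using that_b[OF x] t tB e by linarith
        have "0 \<le> cm * (t - that (tau c) (2 * m) x - tau c xp)" using h cm_pos by (intro mult_nonneg_nonneg) auto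
        hence "xiT cm (tau c) (2 * m) x xp t \<le> 0"
          unfolding xiT_def by simp
        thus "p0 (xiT cm (tau c) (2 * m) x xp t) * (\<Prod>j=1..2 * m. r (x j)) = 1 * (\<Prod>j=1..2 * m. r (x j))"
          using p0_one by simp
      qed
      thus ?thesis unfolding Tcoef_def Tinf_def Ieven[OF False] using False by simp
    qed
  qed
  have CG2: "CG ^ 2 = Zp / Zm" unfolding CG_eq using Zp_pos Zm_pos by simp
  have E1: "2 * Zp / (Zm + Zp) = CG / cosh (ln CG)"
  proof -
    have "CG / cosh (ln CG) = 2 * CG ^ 2 / (CG ^ 2 + 1)"
      using CG_pos by (simp add: cosh_ln_real field_simps power2_eq_square)
    also have "\<dots> = 2 * Zp / (Zm + Zp)" unfolding CG2 using Zp_pos Zm_pos by (simp add: field_simps)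
    finally show ?thesis by simp
  qed
  have E2: "(Zp - Zm) / (Zm + Zp) = tanh (ln CG)"
  proof -
    have "tanh (ln CG) = (CG ^ 2 - 1) / (CG ^ 2 + 1)" by (rule tanh_ln_real[OF CG_pos])
    also have "\<dots> = (Zp - Zm) / (Zm + Zp)" unfolding CG2
    proof -
      have h1: "Zp / Zm - 1 = (Zp - Zm) / Zm" using Zm_pos by (simp add: field_simps)
      have h2: "Zp / Zm + 1 = (Zm + Zp) / Zm" using Zm_pos by (simp add: field_simps)
      show "(Zp / Zm - 1) / (Zp / Zm + 1) = (Zp - Zm) / (Zm + Zp)"
      proof -
        have pp: "Zm * Zm + Zm * Zp > 0" using Zm_pos Zp_pos by (simp add: add_pos_pos)
        show ?thesis unfolding h1 h2 using Zm_pos Zp_pos pp by (simp add: field_split_simps)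
      qed
    qed
    finally show ?thesis by simp
  qed
  have sumT: "Tinf sums (2 * Zp / (Zm + Zp))"
  proof -
    have "(\<lambda>m. CG * ((-1) ^ m * G q xp (2 * m) xp)) sums (CG * (1 / cosh Lq))"
      by (rule sums_mult[OF ser(2)])
    moreover have "cosh Lq = cosh (ln CG)" unfolding Lq_eq L_def sg_def by simp
    ultimately show ?thesis unfolding E1 Tinf_def by (simp add: mult_ac)
  qed
  have sumR: "Rinf sums ((Zp - Zm) / (Zm + Zp))"
  proof -
    have "Rinf sums (sg * tanh Lq)" unfolding Rinf_def by (rule sums_mult[OF ser(1)])
    moreover have "sg * tanh Lq = tanh (ln CG)" unfolding Lq_eq L_def sg_def by simp
    ultimately show ?thesis unfolding E2 by simp
  qed
  show ?thesis using Tlim Rlim sumT sumR E1 E2 by blast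
qed


end
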